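(* Let $\mathcal{M}=(S,A,\mathcal{U},R,s_\iota,\gamma)$ be an $(s,a)$-rectangular RMDP, $s\in S$ and $a\in A$. If there exists $\vec x\in\mathbb{R}^S$ such that \[R(s,a)+\gamma\inf_{\vec u\in\mathcal{U}_{(s,a)}}\sum_{s'\in S}P_{\vec u}(s,a)(s')\vec x(s')<\mathfrak{B}(\vec x)(s)-\frac{\gamma}{1-\gamma}\,\mathsf{span}(\mathfrak{B}(\vec x)-\vec x),\] then action $a$ is suboptimal for state $s$.
   Context: An RMDP $(S,A,\mathcal{U},R,s_\iota,\gamma)$ has finite states $S$, finite actions $A$, rewards $R\colon S\times A\to\mathbb{R}$, initial state $s_\iota$, discount $\gamma\in(0,1)$, and $(s,a)$-rectangular uncertainty set $\mathcal{U}=\prod_{(s,a)}\mathcal{U}_{(s,a)}$, where each $\vec u\in\mathcal{U}_{(s,a)}$ is a probability vector over successor states giving $P_{\vec u}(s,a)(s')=\vec u(s')$. The robust Bellman operator is $\mathfrak{B}(\vec x)(s)=\max_{a\in A}R(s,a)+\gamma\inf_{\vec u\in\mathcal{U}_{(s,a)}}\sum_{s'}P_{\vec u}(s,a)(s')\vec x(s')$ for $\vec x\in\mathbb{R}^S$; $\mathsf{span}(\vec y)=\max_s\vec y(s)-\min_s\vec y(s)$. Let $\vec v$ be the optimal robust value function $\vec v(s)=\sup_\pi\inf_{\vec u\in\mathcal{U}}\mathbb{E}_{\pi,P_{\vec u}}[\sum_t\gamma^tR(s_t,a_t)\mid s_0=s]$, which is the fixed point of $\mathfrak{B}$. Action $a$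 is suboptimal for state $s$ if $R(s,a)+\gamma\inf_{\vec u\in\mathcal{U}_{(s,a)}}\sum_{s'}P_{\vec u}(s,a)(s')\vec v(s')<\vec v(s)$. *)

theory Defs
  imports "HOL-Analysis.Analysis"
begin

text \<open>R : rewards, gam : discount, U s a : the uncertainty set U_(s,a), a set of
  probability vectors over successor states.\<close>

definition rmdp :: "('s::finite \<Rightarrow> 'a::finite \<Rightarrow> real) \<Rightarrow> real \<Rightarrow> ('s \<Rightarrow> 'a \<Rightarrow> ('s \<Rightarrow> real) set) \<Rightarrow> bool" where
  "rmdp R gam U \<longleftrightarrow> 0 < gam \<and> gam < 1 \<and>
     (\<forall>s a. U s a \<noteq> {} \<and> (\<forall>u\<in>U s a. (\<forall>s'. 0 \<le> u s') \<and> (\<Sum>s'\<in>UNIV. u s') = 1))"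

definition robust_q :: "('s::finite \<Rightarrow> 'a::finite \<Rightarrow> real) \<Rightarrow> real \<Rightarrow> ('s \<Rightarrow> 'a \<Rightarrow> ('s \<Rightarrow> real) set)
    \<Rightarrow> ('s \<Rightarrow> real) \<Rightarrow> 's \<Rightarrow> 'a \<Rightarrow> real" where
  "robust_q R gam U x s a = R s a + gam * (INF u\<in>U s a. \<Sum>s'\<in>UNIV. u s' * x s')"

definition bellman :: "('s::finite \<Rightarrow> 'a::finite \<Rightarrow> real) \<Rightarrow> real \<Rightarrow> ('s \<Rightarrow> 'a \<Rightarrow> ('s \<Rightarrow> real) set)
    \<Rightarrow> ('s \<Rightarrow> real) \<Rightarrow> ('s \<Rightarrow> real)" where
  "bellman R gam U x s = Max (range (robust_q R gam U x s))"

definition span :: "('s::finite \<Rightarrow> real) \<Rightarrow> real" where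
  "span y = Max (range y) - Min (range y)"

text \<open>Optimal robust value function, characterised (as in the context) as the
  fixed point of the robust Bellman operator (unique, since it is a gam-contraction).\<close>
definition opt_value :: "('s::finite \<Rightarrow> 'a::finite \<Rightarrow> real) \<Rightarrow> real \<Rightarrow> ('s \<Rightarrow> 'a \<Rightarrow> ('s \<Rightarrow> real) set)
    \<Rightarrow> ('s \<Rightarrow> real)" where
  "opt_value R gam U = (THE v. bellman R gam U v = v)"

definition suboptimal :: "('s::finite \<Rightarrow> 'a::finite \<Rightarrow> real) \<Rightarrow> real \<Rightarrow> ('s \<Rightarrow> 'a \<Rightarrow> ('s \<Rightarrow> real) set)
    \<Rightarrow> 's \<Rightarrow> 'a \<Rightarrow> bool" where
  "suboptimal R gam U s a \<longleftrightarrow> robust_q R gam U (opt_value R gam U) s a < opt_value R gam U s"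

end

theory Submission imports Defs begin

lemma INF_le_shift:
  fixes f g :: "'u \<Rightarrow> real"
  assumes "X \<noteq> {}" "bdd_below (f ` X)" "\<And>u. u \<in> X \<Longrightarrow> f u \<le> g u + c"
  shows "(INF u\<in>X. f u) \<le> (INF u\<in>X. g u) + c"
proof -
  have "(INF u\<in>X. f u) - c \<le> (INF u\<in>X. g u)"
  proof (rule cINF_greatest[OF assms(1)])
    fix u assume u: "u \<in> X"
    have "(INF u\<in>X. f u) \<le> f u" by (rule cINF_lower[OF assms(2) u])
    then show "(INF u\<in>X. f u) - c \<le> g u" using assms(3)[OF u] by linarith
  qed
  then show ?thesis by linarith
qed

lemma Max_range_ge: "f x \<le> Max (range (f :: 'a::finite \<Rightarrow> real))"
  by (rule Max_ge) auto

lemma Max_range_in: "\<exists>x. Max (range (f :: 'a::finite \<Rightarrow> real)) = f x"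
proof -
  have "Max (range f) \<in> range f" by (rule Max_in) auto
  then show ?thesis by (metis imageE)
qed

lemma Min_range_le: "Min (range (f :: 'a::finite \<Rightarrow> real)) \<le> f x"
  by (rule Min_le) auto

lemma Min_range_in: "\<exists>x. Min (range (f :: 'a::finite \<Rightarrow> real)) = f x"
proof -
  have "Min (range f) \<in> range f" by (rule Min_in) auto
  then show ?thesis by (metis imageE)
qed

context
  fixes R :: "'s::finite \<Rightarrow> 'a::finite \<Rightarrow> real" and gam :: real
    and U :: "'s \<Rightarrow> 'a \<Rightarrow> ('s \<Rightarrow> real) set"
  assumes rm: "rmdp R gam U"
begin

lemma gam: "0 < gam" "gam < 1" using rm by (auto simp: rmdp_def)
lemma Une: "U s a \<noteq> {}" using rm by (auto simp: rmdp_def)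
lemma Upos: "u \<in> U s a \<Longrightarrow> 0 \<le> u t" using rm by (auto simp: rmdp_def)
lemma Usum: "u \<in> U s a \<Longrightarrow> (\<Sum>t\<in>UNIV. u t) = 1" using rm by (auto simp: rmdp_def)

lemma sum_lin_le:
  assumes u: "u \<in> U s a" and le: "\<And>t. x t \<le> y t + c"
  shows "(\<Sum>t\<in>UNIV. u t * x t) \<le> (\<Sum>t\<in>UNIV. u t * y t) + c"
proof -
  have "(\<Sum>t\<in>UNIV. u t * x t) \<le> (\<Sum>t\<in>UNIV. u t * (y t + c))"
    by (rule sum_mono) (simp add: Upos[OF u] le mult_left_mono)
  also have "\<dots> = (\<Sum>t\<in>UNIV. u t * y t) + c * (\<Sum>t\<in>UNIV. u t)"
    by (simp add: algebra_simps sum.distrib sum_distrib_left)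
  finally show ?thesis using Usum[OF u] by simp
qed

lemma bdd: "bdd_below ((\<lambda>u. \<Sum>t\<in>UNIV. u t * x t) ` U s a)"
proof (rule bdd_belowI)
  fix z assume "z \<in> (\<lambda>u. \<Sum>t\<in>UNIV. u t * x t) ` U s a"
  then obtain u where u: "u \<in> U s a" and z: "z = (\<Sum>t\<in>UNIV. u t * x t)" by auto
  have "(\<Sum>t\<in>UNIV. u t * (\<lambda>_. Min (range x)) t) \<le> (\<Sum>t\<in>UNIV. u t * x t) + 0"
    by (rule sum_lin_le[OF u]) (simp add: Min_range_le)
  then show "Min (range x) \<le> z" using Usum[OF u] z by (simp add: sum_distrib_right[symmetric])
qed

lemma q_le:
  assumes "\<And>t. x t \<le> y t + c"
  shows "robust_q R gam U x s a \<le> robust_q R gam U y s a + gam * c"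
proof -
  have "(INF u\<in>U s a. \<Sum>t\<in>UNIV. u t * x t) \<le> (INF u\<in>U s a. \<Sum>t\<in>UNIV. u t * y t) + c"
    by (rule INF_le_shift[OF Une bdd]) (rule sum_lin_le, auto simp: assms)
  then show ?thesis unfolding robust_q_def using gam
    by (smt (verit, best) mult_left_mono distrib_left)
qed

lemma B_ge: "robust_q R gam U x s a \<le> bellman R gam U x s"
  unfolding bellman_def by (rule Max_range_ge)

lemma B_in: "\<exists>a. bellman R gam U x s = robust_q R gam U x s a"
  unfolding bellman_def by (rule Max_range_in)

lemma B_le:
  assumes "\<And>t. x t \<le> y t + c"
  shows "bellman R gam U x s \<le> bellman R gam U y s + gam * c"
proof -
  obtain a where "bellman R gam U x s = robust_q R gam U x s a" using B_in by blast
  then show ?thesis using q_le[where x=x and y=y and c=c and s=s and a=a, OF assms] B_ge[of y s a] by linarith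
qed

lemma B_shift: "bellman R gam U (\<lambda>t. x t + c) s = bellman R gam U x s + gam * c"
  using B_le[where x="\<lambda>t. x t + c" and y=x and c=c and s=s] B_le[where x=x and y="\<lambda>t. x t + c" and c="-c" and s=s] by force

lemma B_mono: "(\<And>t. x t \<le> y t) \<Longrightarrow> bellman R gam U x s \<le> bellman R gam U y s"
  using B_le[of x y 0 s] by simp

lemma B_lip: "\<bar>bellman R gam U x s - bellman R gam U y s\<bar> \<le> gam * Max (range (\<lambda>t. \<bar>x t - y t\<bar>))"
proof -
  let ?D = "Max (range (\<lambda>t. \<bar>x t - y t\<bar>))"
  have h: "\<bar>x t - y t\<bar> \<le> ?D" for t using Max_range_ge[of "\<lambda>t. \<bar>x t - y t\<bar>" t] by simp
  have h1: "x t \<le> y t + ?D" "y t \<le> x t + ?D" for t using h[of t] by linarith+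
  have "bellman R gam U x s \<le> bellman R gam U y s + gam * ?D"
    by (rule B_le) (rule h1)
  moreover have "bellman R gam U y s \<le> bellman R gam U x s + gam * ?D"
    by (rule B_le) (rule h1)
  ultimately show ?thesis by linarith
qed


lemma fix_unique:
  assumes "bellman R gam U x = x" "bellman R gam U y = y"
  shows "x = y"
proof -
  let ?D = "Max (range (\<lambda>t. \<bar>x t - y t\<bar>))"
  obtain t0 where t0: "?D = \<bar>x t0 - y t0\<bar>" using Max_range_in by blast
  have "\<bar>x t0 - y t0\<bar> = \<bar>bellman R gam U x t0 - bellman R gam U y t0\<bar>" using assms by simp
  then have "?D \<le> gam * ?D" using B_lip[of x t0 y] t0 by linarith
  then have "(1 - gam) * ?D \<le> 0" by (simp add: algebra_simps)
  then have "?D \<le> 0" using gam by (simp add: mult_le_0_iff)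
  then have "\<bar>x t - y t\<bar> \<le> 0" for t using Max_range_ge[of "\<lambda>t. \<bar>x t - y t\<bar>" t] by simp
  then show ?thesis by force
qed

definition N :: "real^'s \<Rightarrow> real" where "N w = Max (range (\<lambda>t. \<bar>w $ t\<bar>))"

lemma N_ge: "\<bar>w $ t\<bar> \<le> N w" unfolding N_def by (rule Max_range_ge)

lemma N_le_norm: "N w \<le> norm w"
proof -
  obtain t where "N w = \<bar>w $ t\<bar>" unfolding N_def using Max_range_in by blast
  then show ?thesis using component_le_norm_cart[of w t] by simp
qed

lemma norm_le_N: "norm w \<le> real CARD('s) * N w"
proof -
  have "norm w \<le> (\<Sum>i\<in>UNIV. \<bar>w $ i\<bar>)" by (rule norm_le_l1_cart)
  also have "\<dots> \<le> (\<Sum>i\<in>(UNIV::'s set). N w)" by (rule sum_mono) (rule N_ge)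
  finally show ?thesis by simp
qed

definition F :: "real^'s \<Rightarrow> real^'s" where
  "F w = (\<chi> t. bellman R gam U (\<lambda>i. w $ i) t)"

lemma F_lip: "N (F w - F w') \<le> gam * N (w - w')"
proof -
  obtain t where t: "N (F w - F w') = \<bar>(F w - F w') $ t\<bar>" unfolding N_def using Max_range_in by blast
  have "Max (range (\<lambda>i. \<bar>w $ i - w' $ i\<bar>)) = N (w - w')" unfolding N_def by simp
  then show ?thesis using t B_lip[of "\<lambda>i. w $ i" t "\<lambda>i. w' $ i"] by (simp add: F_def)
qed

lemma F_iter: "N ((F ^^ k) w - (F ^^ k) w') \<le> gam ^ k * N (w - w')"
proof (induction k)
  case 0 then show ?case by simp
next
  case (Suc k)
  have "N ((F ^^ Suc k) w - (F ^^ Suc k) w') \<le> gam * N ((F ^^ k) w - (F ^^ k) w')"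
    using F_lip by simp
  also have "\<dots> \<le> gam * (gam ^ k * N (w - w'))" using Suc gam by (simp add: mult_left_mono)
  finally show ?case by simp
qed

lemma fix_exists: "\<exists>v. bellman R gam U v = v"
proof -
  define n where "n = real CARD('s)"
  have n: "n > 0" unfolding n_def by simp
  obtain k where k: "gam ^ k < 1 / n" using real_arch_pow_inv[of "1/n" gam] n gam by auto
  have c: "n * gam ^ k < 1" using k n by (simp add: field_simps)
  have lip: "dist ((F ^^ k) w) ((F ^^ k) w') \<le> (n * gam ^ k) * dist w w'" for w w'
  proof -
    have "dist ((F ^^ k) w) ((F ^^ k) w') \<le> n * N ((F ^^ k) w - (F ^^ k) w')"
      unfolding dist_norm n_def by (rule norm_le_N)
    also have "\<dots> \<le> n * (gam ^ k * N (w - w'))" using F_iter n by (simp add: mult_left_mono)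
    also have "\<dots> \<le> n * (gam ^ k * dist w w')"
      using N_le_norm[of "w - w'"] n gam by (simp add: dist_norm mult_left_mono)
    finally show ?thesis by simp
  qed
  have "\<exists>!p. (F ^^ k) p = p"
    by (rule banach_fix_type[of "n * gam ^ k"]) (use c n gam lip in auto)
  then obtain p where p: "(F ^^ k) p = p" and un: "\<And>q. (F ^^ k) q = q \<Longrightarrow> q = p" by blast
  have "(F ^^ k) (F p) = F p" by (metis p funpow_swap1)
  then have "F p = p" by (rule un)
  then have "(F p) $ i = p $ i" for i by simp
  then have "bellman R gam U (\<lambda>i. p $ i) i = p $ i" for i by (simp add: F_def)
  then have "bellman R gam U (\<lambda>i. p $ i) = (\<lambda>i. p $ i)" by (rule ext)
  then show ?thesis by blast
qed

lemma opt_fix: "bellman R gam U (opt_value R gam U) = opt_value R gam U"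
proof -
  obtain v where v: "bellman R gam U v = v" using fix_exists by blast
  show ?thesis unfolding opt_value_def by (rule theI[of _ v]) (use v fix_unique in blast)+
qed

lemma below_v:
  assumes "\<And>t. y t \<le> bellman R gam U y t"
  shows "y t \<le> opt_value R gam U t"
proof (rule ccontr)
  let ?v = "opt_value R gam U"
  let ?d = "Max (range (\<lambda>t. y t - ?v t))"
  assume "\<not> y t \<le> ?v t"
  then have dpos: "?d > 0" using Max_range_ge[of "\<lambda>t. y t - ?v t" t] by linarith
  obtain t0 where t0: "?d = y t0 - ?v t0" using Max_range_in by blast
  have "y t0 \<le> bellman R gam U y t0" by (rule assms)
  also have "\<dots> \<le> bellman R gam U ?v t0 + gam * ?d"
  proof (rule B_le)
    fix t show "y t \<le> ?v t + ?d" using Max_range_ge[of "\<lambda>t. y t - ?v t" t] by linarith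
  qed
  also have "\<dots> = ?v t0 + gam * ?d" using opt_fix by simp
  finally have "?d \<le> gam * ?d" using t0 by linarith
  moreover have "gam * ?d < 1 * ?d" by (rule mult_strict_right_mono) (use dpos gam in auto)
  ultimately show False by linarith
qed

lemma above_v:
  assumes "\<And>t. bellman R gam U y t \<le> y t"
  shows "opt_value R gam U t \<le> y t"
proof (rule ccontr)
  let ?v = "opt_value R gam U"
  let ?d = "Max (range (\<lambda>t. ?v t - y t))"
  assume "\<not> ?v t \<le> y t"
  then have dpos: "?d > 0" using Max_range_ge[of "\<lambda>t. ?v t - y t" t] by linarith
  obtain t0 where t0: "?d = ?v t0 - y t0" using Max_range_in by blast
  have "?v t0 = bellman R gam U ?v t0" using opt_fix by simp
  also have "\<dots> \<le> bellman R gam U y t0 + gam * ?d"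
  proof (rule B_le)
    fix t show "?v t \<le> y t + ?d" using Max_range_ge[of "\<lambda>t. ?v t - y t" t] by linarith
  qed
  also have "\<dots> \<le> y t0 + gam * ?d" using assms by simp
  finally have "?d \<le> gam * ?d" using t0 by linarith
  moreover have "gam * ?d < 1 * ?d" by (rule mult_strict_right_mono) (use dpos gam in auto)
  ultimately show False by linarith
qed

end

theorem theorem27:
  fixes R :: "'s::finite \<Rightarrow> 'a::finite \<Rightarrow> real" and gam :: real
    and U :: "'s \<Rightarrow> 'a \<Rightarrow> ('s \<Rightarrow> real) set" and s :: 's and a :: 'a
  assumes "rmdp R gam U"
    and "\<exists>x :: 's \<Rightarrow> real. robust_q R gam U x s a
           < bellman R gam U x s - gam / (1 - gam) * span (\<lambda>t. bellman R gam U x t - x t)"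
  shows "suboptimal R gam U s a"
proof -
  note rm = assms(1)
  note g = gam[OF rm]
  obtain x where x: "robust_q R gam U x s a
           < bellman R gam U x s - gam / (1 - gam) * span (\<lambda>t. bellman R gam U x t - x t)"
    using assms(2) by blast
  let ?B = "bellman R gam U"
  let ?v = "opt_value R gam U"
  define m where "m = Min (range (\<lambda>t. ?B x t - x t))"
  define M where "M = Max (range (\<lambda>t. ?B x t - x t))"
  have sp: "span (\<lambda>t. ?B x t - x t) = M - m" unfolding span_def m_def M_def by simp
  define c1 where "c1 = m / (1 - gam)"
  define c2 where "c2 = M / (1 - gam)"
  have c1e: "m + gam * c1 = c1" and c2e: "M + gam * c2 = c2" using g
    unfolding c1_def c2_def by (auto simp: field_simps)
  have mle: "m \<le> ?B x t - x t" for t unfolding m_def by (rule Min_range_le)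
  have Mge: "?B x t - x t \<le> M" for t unfolding M_def by (rule Max_range_ge)
  have y: "x t + c1 \<le> ?v t" for t
  proof (rule below_v[OF rm, where y="\<lambda>t. x t + c1"])
    fix t show "x t + c1 \<le> ?B (\<lambda>t. x t + c1) t"
      using B_shift[OF rm, of x c1 t] mle[of t] c1e by linarith
  qed
  have z: "?v t \<le> x t + c2" for t
  proof (rule above_v[OF rm, where y="\<lambda>t. x t + c2"])
    fix t show "?B (\<lambda>t. x t + c2) t \<le> x t + c2"
      using B_shift[OF rm, of x c2 t] Mge[of t] c2e by linarith
  qed
  have "robust_q R gam U ?v s a \<le> robust_q R gam U x s a + gam * c2"
    by (rule q_le[OF rm]) (use z in auto)
  moreover have "?B x s + gam * c1 \<le> ?v s"
  proof -
    have "?B x s + gam * c1 = ?B (\<lambda>t. x t + c1) s" using B_shift[OF rm, of x c1 s] by simp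
    also have "\<dots> \<le> ?B ?v s" by (rule B_mono[OF rm]) (rule y)
    also have "\<dots> = ?v s" using opt_fix[OF rm] by simp
    finally show ?thesis .
  qed
  moreover have "gam * c2 - gam * c1 = gam / (1 - gam) * (M - m)"
  proof -
    have "gam * c2 - gam * c1 = gam * ((M - m) / (1 - gam))"
      unfolding c1_def c2_def by (simp add: diff_divide_distrib right_diff_distrib)
    then show ?thesis by simp
  qed
  ultimately show ?thesis unfolding suboptimal_def using x[unfolded sp] by linarith
qed

end
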